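(* Let $\mathcal{V}$ be an equational class and $\mathbf{A}\in\mathsf{FP}(\mathcal{V})$ such that the set $\mathrm{Con}(\mathbf{A})$ of congruences of $\mathbf{A}$ is totally ordered by inclusion. If $\mathsf{C}_{\mathcal{V}}(\mathbf{A})\neq\emptyset$, then $\mathsf{C}_{\mathcal{V}}(\mathbf{A})$ is totally (pre)ordered and $\mathrm{type}(\mathsf{C}_{\mathcal{V}}(\mathbf{A}))\in\{1,0\}$. In particular, if $\mathbf{A}$ is simple, then either $\mathsf{C}_{\mathcal{V}}(\mathbf{A})=\emptyset$ or $\mathrm{type}(\mathsf{C}_{\mathcal{V}}(\mathbf{A}))=1$.
   Context: $\mathsf{FP}(\mathcal{V})$ is the class of finitely presented algebras of $\mathcal{V}$; $\mathbf{F}_{\mathcal{V}}(\omega)$ is the free algebra of $\mathcal{V}$ on countably many generators. An algebra is exact in $\mathcal{V}$ if isomorphic to a finitely generated subalgebra of $\mathbf{F}_{\mathcal{V}}(\omega)$. A coexact unifier of $\mathbf{A}$ is an onto homomorphism $u\colon\mathbf{A}\to\mathbf{E}$ with $\mathbf{E}$ exact in $\mathcal{V}$; for coexact unifiers $u_1\colon\mathbf{A}\to\mathbf{E}_1$, $u_2\colon\mathbf{A}\to\mathbf{E}_2$, $u_2\le u_1$ iff there is a homomorphism $f\colon\mathbf{E}_1\to\mathbf{E}_2$ with $f\circ u_1=u_2$; $\mathsf{C}_{\mathcal{V}}(\mathbf{A})$ is the set of coexact unifiers preordered by $\le$. Types of a nonempty preordered set via $\mu$-sets (complete sets — every element lies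 below a member — of pairwise incomparable elements): $0$ if none exists, $\infty$ if infinite, $\omega$ if finite of size $>1$, $1$ if of size $1$. *)

theory Defs
  imports Main
begin

datatype ('f, 'v) trm = Var 'v | Fn 'f "('f, 'v) trm list"

fun wf_trm :: "('f \<Rightarrow> nat) \<Rightarrow> ('f, 'v) trm \<Rightarrow> bool" where
  "wf_trm ar (Var v) = True"
| "wf_trm ar (Fn f ts) = (length ts = ar f \<and> (\<forall>t\<in>set ts. wf_trm ar t))"

fun vars :: "('f, 'v) trm \<Rightarrow> 'v set" where
  "vars (Var v) = {v}"
| "vars (Fn f ts) = (\<Union>t\<in>set ts. vars t)"

fun subst :: "('v \<Rightarrow> ('f, 'w) trm) \<Rightarrow> ('f, 'v) trm \<Rightarrow> ('f, 'w) trm" where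
  "subst \<sigma> (Var v) = \<sigma> v"
| "subst \<sigma> (Fn f ts) = Fn f (map (subst \<sigma>) ts)"

record ('a, 'f) alg =
  car :: "'a set"
  ops :: "'f \<Rightarrow> 'a list \<Rightarrow> 'a"

fun eval :: "('a, 'f) alg \<Rightarrow> ('v \<Rightarrow> 'a) \<Rightarrow> ('f, 'v) trm \<Rightarrow> 'a" where
  "eval A h (Var v) = h v"
| "eval A h (Fn f ts) = ops A f (map (eval A h) ts)"

definition is_alg :: "('f \<Rightarrow> nat) \<Rightarrow> ('a, 'f) alg \<Rightarrow> bool" where
  "is_alg ar A \<longleftrightarrow> (\<forall>f xs. length xs = ar f \<and> set xs \<subseteq> car A \<longrightarrow> ops A f xs \<in> car A)"

definition models :: "('f \<Rightarrow> nat) \<Rightarrow> (('f, nat) trm \<times> ('f, nat) trm) set \<Rightarrow> ('a, 'f) alg \<Rightarrow> bool" where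
  "models ar E A \<longleftrightarrow> is_alg ar A \<and>
     (\<forall>(s, t)\<in>E. \<forall>h. (\<forall>v. h v \<in> car A) \<longrightarrow> eval A h s = eval A h t)"

definition hom :: "('f \<Rightarrow> nat) \<Rightarrow> ('a, 'f) alg \<Rightarrow> ('b, 'f) alg \<Rightarrow> ('a \<Rightarrow> 'b) \<Rightarrow> bool" where
  "hom ar A B h \<longleftrightarrow> h ` car A \<subseteq> car B \<and>
     (\<forall>f xs. length xs = ar f \<and> set xs \<subseteq> car A \<longrightarrow> h (ops A f xs) = ops B f (map h xs))"

definition isomorphic :: "('f \<Rightarrow> nat) \<Rightarrow> ('a, 'f) alg \<Rightarrow> ('b, 'f) alg \<Rightarrow> bool" where
  "isomorphic ar A B \<longleftrightarrow> (\<exists>h. hom ar A B h \<and> bij_betw h (car A) (car B))"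

definition congruence :: "('f \<Rightarrow> nat) \<Rightarrow> ('a, 'f) alg \<Rightarrow> 'a rel \<Rightarrow> bool" where
  "congruence ar A \<theta> \<longleftrightarrow> equiv (car A) \<theta> \<and>
     (\<forall>f xs ys. length xs = ar f \<and> list_all2 (\<lambda>x y. (x, y) \<in> \<theta>) xs ys
        \<longrightarrow> (ops A f xs, ops A f ys) \<in> \<theta>)"

definition Con :: "('f \<Rightarrow> nat) \<Rightarrow> ('a, 'f) alg \<Rightarrow> 'a rel set" where
  "Con ar A = {\<theta>. congruence ar A \<theta>}"

definition Cg :: "('f \<Rightarrow> nat) \<Rightarrow> ('a, 'f) alg \<Rightarrow> 'a rel \<Rightarrow> 'a rel" where
  "Cg ar A R = \<Inter>{\<theta>. congruence ar A \<theta> \<and> R \<subseteq> \<theta>}"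

definition simple :: "('f \<Rightarrow> nat) \<Rightarrow> ('a, 'f) alg \<Rightarrow> bool" where
  "simple ar A \<longleftrightarrow> Id_on (car A) \<noteq> car A \<times> car A \<and>
     Con ar A = {Id_on (car A), car A \<times> car A}"

definition quot :: "('a, 'f) alg \<Rightarrow> 'a rel \<Rightarrow> ('a set, 'f) alg" where
  "quot A \<theta> = \<lparr> car = car A // \<theta>,
      ops = (\<lambda>f Xs. \<theta> `` {ops A f (map (\<lambda>X. SOME x. x \<in> X) Xs)}) \<rparr>"

definition Sg :: "('f \<Rightarrow> nat) \<Rightarrow> ('a, 'f) alg \<Rightarrow> 'a set \<Rightarrow> 'a set" where
  "Sg ar A G = \<Inter>{S. G \<subseteq> S \<and> S \<subseteq> car A \<and>
     (\<forall>f xs. length xs = ar f \<and> set xs \<subseteq> S \<longrightarrow> ops A f xs \<in> S)}"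

definition subalg :: "('a, 'f) alg \<Rightarrow> 'a set \<Rightarrow> ('a, 'f) alg" where
  "subalg A S = \<lparr> car = S, ops = ops A \<rparr>"

inductive eqc :: "('f \<Rightarrow> nat) \<Rightarrow> (('f, nat) trm \<times> ('f, nat) trm) set
                  \<Rightarrow> ('f, nat) trm \<Rightarrow> ('f, nat) trm \<Rightarrow> bool"
  for ar E where
  eqc_ax: "(s, t) \<in> E \<Longrightarrow> (\<forall>v. wf_trm ar (\<sigma> v)) \<Longrightarrow> eqc ar E (subst \<sigma> s) (subst \<sigma> t)"
| eqc_refl: "wf_trm ar t \<Longrightarrow> eqc ar E t t"
| eqc_sym: "eqc ar E s t \<Longrightarrow> eqc ar E t s"
| eqc_trans: "eqc ar E s t \<Longrightarrow> eqc ar E t u \<Longrightarrow> eqc ar E s u"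
| eqc_cong: "length ss = ar f \<Longrightarrow> list_all2 (eqc ar E) ss ts \<Longrightarrow> eqc ar E (Fn f ss) (Fn f ts)"

definition term_alg :: "('f \<Rightarrow> nat) \<Rightarrow> nat set \<Rightarrow> (('f, nat) trm, 'f) alg" where
  "term_alg ar X = \<lparr> car = {t. wf_trm ar t \<and> vars t \<subseteq> X}, ops = Fn \<rparr>"

text \<open>Free algebra F_V(X) of V = Mod(E) on the generators X (X = UNIV gives F_V(omega)).\<close>
definition free_alg :: "('f \<Rightarrow> nat) \<Rightarrow> (('f, nat) trm \<times> ('f, nat) trm) set \<Rightarrow> nat set
                        \<Rightarrow> (('f, nat) trm set, 'f) alg" where
  "free_alg ar E X = quot (term_alg ar X)
     {(s, t). s \<in> car (term_alg ar X) \<and> t \<in> car (term_alg ar X) \<and> eqc ar E s t}"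

definition fin_pres :: "('f \<Rightarrow> nat) \<Rightarrow> (('f, nat) trm \<times> ('f, nat) trm) set \<Rightarrow> ('a, 'f) alg \<Rightarrow> bool" where
  "fin_pres ar E A \<longleftrightarrow> models ar E A \<and>
     (\<exists>n R. finite R \<and> R \<subseteq> car (free_alg ar E {..<n}) \<times> car (free_alg ar E {..<n}) \<and>
        isomorphic ar A (quot (free_alg ar E {..<n}) (Cg ar (free_alg ar E {..<n}) R)))"

definition exact :: "('f \<Rightarrow> nat) \<Rightarrow> (('f, nat) trm \<times> ('f, nat) trm) set \<Rightarrow> ('b, 'f) alg \<Rightarrow> bool" where
  "exact ar E B \<longleftrightarrow> (\<exists>G. finite G \<and> G \<subseteq> car (free_alg ar E UNIV) \<and>
     isomorphic ar B (subalg (free_alg ar E UNIV) (Sg ar (free_alg ar E UNIV) G)))"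

text \<open>Every exact algebra is isomorphic to one whose carrier consists of elements of
  F_V(omega), so the codomains are taken of that type (this is the same preordered
  class up to equivalence).  u is taken extensional (undefined outside car A).\<close>
definition coexact :: "('f \<Rightarrow> nat) \<Rightarrow> (('f, nat) trm \<times> ('f, nat) trm) set \<Rightarrow> ('a, 'f) alg
                       \<Rightarrow> (('a \<Rightarrow> ('f, nat) trm set) \<times> (('f, nat) trm set, 'f) alg) set" where
  "coexact ar E A = {(u, B). exact ar E B \<and> hom ar A B u \<and> u ` car A = car B \<and>
                       (\<forall>x. x \<notin> car A \<longrightarrow> u x = undefined)}"

definition unif_le :: "('f \<Rightarrow> nat) \<Rightarrow> ('a, 'f) alg
     \<Rightarrow> ('a \<Rightarrow> 'b) \<times> ('b, 'f) alg \<Rightarrow> ('a \<Rightarrow> 'b) \<times> ('b, 'f) alg \<Rightarrow> bool" where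
  "unif_le ar A p q \<longleftrightarrow> (case p of (u2, B2) \<Rightarrow> case q of (u1, B1) \<Rightarrow>
      \<exists>f. hom ar B1 B2 f \<and> (\<forall>x\<in>car A. f (u1 x) = u2 x))"

definition complete_set :: "'p set \<Rightarrow> ('p \<Rightarrow> 'p \<Rightarrow> bool) \<Rightarrow> 'p set \<Rightarrow> bool" where
  "complete_set P le M \<longleftrightarrow> M \<subseteq> P \<and> (\<forall>x\<in>P. \<exists>m\<in>M. le x m)"

definition mu_set :: "'p set \<Rightarrow> ('p \<Rightarrow> 'p \<Rightarrow> bool) \<Rightarrow> 'p set \<Rightarrow> bool" where
  "mu_set P le M \<longleftrightarrow> complete_set P le M \<and>
     (\<forall>m\<in>M. \<forall>m'\<in>M. m \<noteq> m' \<longrightarrow> \<not> le m m' \<and> \<not> le m' m)"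

datatype utype = Type0 | Type1 | TypeOmega | TypeInf

definition type_of :: "'p set \<Rightarrow> ('p \<Rightarrow> 'p \<Rightarrow> bool) \<Rightarrow> utype" where
  "type_of P le =
    (if \<not> (\<exists>M. mu_set P le M) then Type0
     else if \<exists>M. mu_set P le M \<and> infinite M then TypeInf
     else if \<exists>M. mu_set P le M \<and> card M > 1 then TypeOmega
     else Type1)"

definition totally_preordered :: "'p set \<Rightarrow> ('p \<Rightarrow> 'p \<Rightarrow> bool) \<Rightarrow> bool" where
  "totally_preordered P le \<longleftrightarrow> (\<forall>x\<in>P. \<forall>y\<in>P. le x y \<or> le y x)"

end

theory Submission
  imports Defs
begin

definition kerU :: "('a, 'f) alg \<Rightarrow> ('a \<Rightarrow> 'b) \<Rightarrow> 'a rel" where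
  "kerU A u = {(x, y). x \<in> car A \<and> y \<in> car A \<and> u x = u y}"

lemma ker_con:
  assumes alg: "is_alg ar A" and h: "hom ar A B u"
  shows "kerU A u \<in> Con ar A"
proof -
  have eq: "equiv (car A) (kerU A u)"
  proof (rule equivI)
    show "kerU A u \<subseteq> car A \<times> car A" by (auto simp: kerU_def)
    show "refl_on (car A) (kerU A u)" by (rule refl_onI) (simp add: kerU_def)
    show "sym (kerU A u)" by (rule symI) (simp add: kerU_def)
    show "trans (kerU A u)" by (rule transI) (simp add: kerU_def)
  qed
  have "(ops A f xs, ops A f ys) \<in> kerU A u"
    if l: "length xs = ar f" and r: "list_all2 (\<lambda>x y. (x, y) \<in> kerU A u) xs ys" for f xs ys
  proof -
    have ly: "length ys = ar f" using l r list_all2_lengthD by fastforce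
    have sxy: "set xs \<subseteq> car A \<and> set ys \<subseteq> car A"
      using r by (induct rule: list_all2_induct) (simp_all add: kerU_def)
    hence sx: "set xs \<subseteq> car A" and sy: "set ys \<subseteq> car A" by auto
    have mm: "map u xs = map u ys" using r
      by (induct rule: list_all2_induct) (auto simp: kerU_def)
    have "u (ops A f xs) = ops B f (map u xs)" using h l sx by (simp add: hom_def)
    also have "\<dots> = ops B f (map u ys)" using mm by simp
    also have "\<dots> = u (ops A f ys)" using h ly sy by (simp add: hom_def)
    finally show ?thesis using alg l ly sx sy by (auto simp: kerU_def is_alg_def)
  qed
  thus ?thesis using eq by (auto simp: Con_def congruence_def)
qed

lemma le_of_ker:
  assumes alg: "is_alg ar A"
    and c1: "(u1, B1) \<in> coexact ar E A" and c2: "(u2, B2) \<in> coexact ar E A"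
    and k: "kerU A u1 \<subseteq> kerU A u2"
  shows "unif_le ar A (u2, B2) (u1, B1)"
proof -
  define pick where "pick y = (SOME x. x \<in> car A \<and> u1 x = y)" for y
  define g where "g y = u2 (pick y)" for y
  have h1: "hom ar A B1 u1" "u1 ` car A = car B1" using c1 by (auto simp: coexact_def)
  have h2: "hom ar A B2 u2" "u2 ` car A = car B2" using c2 by (auto simp: coexact_def)
  have pk: "pick y \<in> car A \<and> u1 (pick y) = y" if "y \<in> car B1" for y
  proof -
    have "y \<in> u1 ` car A" using that h1(2) by simp
    then obtain x where "x \<in> car A" "u1 x = y" by (rule imageE) simp
    hence "\<exists>x. x \<in> car A \<and> u1 x = y" by blast
    thus ?thesis unfolding pick_def by (rule someI_ex)
  qed
  have gu: "g (u1 x) = u2 x" if "x \<in> car A" for x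
  proof -
    have "u1 x \<in> car B1" using that h1(2) by auto
    from pk[OF this] have "(pick (u1 x), x) \<in> kerU A u1" using that by (auto simp: kerU_def)
    with k have "(pick (u1 x), x) \<in> kerU A u2" by auto
    thus ?thesis by (simp add: kerU_def g_def)
  qed
  have "hom ar B1 B2 g"
    unfolding hom_def
  proof (intro conjI allI impI)
    show "g ` car B1 \<subseteq> car B2"
      using pk h2(2) by (auto simp: g_def)
  next
    fix f xs assume a: "length xs = ar f \<and> set xs \<subseteq> car B1"
    define as where "as = map pick xs"
    have sa: "set as \<subseteq> car A" using a pk by (auto simp: as_def)
    have "\<forall>y\<in>set xs. u1 (pick y) = y" using a pk by blast
    hence ma: "map u1 as = xs" unfolding as_def by (induct xs) simp_all
    have la: "length as = ar f" using a by (simp add: as_def)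
    have "g (ops B1 f xs) = g (u1 (ops A f as))"
      using h1(1) la sa ma by (simp add: hom_def)
    also have "\<dots> = u2 (ops A f as)" using gu alg la sa by (simp add: is_alg_def)
    also have "\<dots> = ops B2 f (map u2 as)" using h2(1) la sa by (simp add: hom_def)
    also have "map u2 as = map g xs" by (simp add: as_def g_def)
    finally show "g (ops B1 f xs) = ops B2 f (map g xs)" .
  qed
  thus ?thesis using gu by (auto simp: unif_le_def)
qed

lemma mu_single:
  assumes "mu_set P le M" "totally_preordered P le" "P \<noteq> {}"
  shows "\<exists>m. M = {m}"
proof -
  from assms(1,3) obtain m where m: "m \<in> M"
    unfolding mu_set_def complete_set_def by blast
  have "M = {m}"
    using assms(1,2) m unfolding mu_set_def complete_set_def totally_preordered_def by blast
  thus ?thesis by blast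
qed

lemma type_total:
  assumes "totally_preordered P le" "P \<noteq> {}"
  shows "type_of P le \<in> {Type1, Type0}"
proof -
  have "\<not> (\<exists>M. mu_set P le M \<and> infinite M)" using mu_single[OF _ assms] by fastforce
  moreover have "\<not> (\<exists>M. mu_set P le M \<and> card M > 1)" using mu_single[OF _ assms] by fastforce
  ultimately show ?thesis unfolding type_of_def by auto
qed

lemma type_max:
  assumes "totally_preordered P le" "m \<in> P" "\<forall>x\<in>P. le x m"
  shows "type_of P le = Type1"
proof -
  have "mu_set P le {m}" using assms by (auto simp: mu_set_def complete_set_def)
  moreover have "\<not> (\<exists>M. mu_set P le M \<and> infinite M)" using mu_single[OF _ assms(1)] assms(2) by fastforce
  moreover have "\<not> (\<exists>M. mu_set P le M \<and> card M > 1)" using mu_single[OF _ assms(1)] assms(2) by fastforce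
  ultimately show ?thesis unfolding type_of_def by auto
qed

lemma total:
  assumes alg: "is_alg ar A"
    and ch: "\<forall>\<theta>1\<in>Con ar A. \<forall>\<theta>2\<in>Con ar A. \<theta>1 \<subseteq> \<theta>2 \<or> \<theta>2 \<subseteq> \<theta>1"
  shows "totally_preordered (coexact ar E A) (unif_le ar A)"
  unfolding totally_preordered_def
proof (intro ballI)
  fix p q assume p: "p \<in> coexact ar E A" and q: "q \<in> coexact ar E A"
  obtain u1 B1 where P: "p = (u1, B1)" by fastforce
  obtain u2 B2 where Q: "q = (u2, B2)" by fastforce
  have "kerU A u1 \<in> Con ar A" "kerU A u2 \<in> Con ar A"
    using p q P Q ker_con[OF alg] by (auto simp: coexact_def)
  with ch have "kerU A u1 \<subseteq> kerU A u2 \<or> kerU A u2 \<subseteq> kerU A u1" by blast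
  thus "unif_le ar A p q \<or> unif_le ar A q p"
    using le_of_ker[OF alg] p q P Q by metis
qed

theorem corollary3p9:
  fixes ar :: "'f \<Rightarrow> nat"
    and E :: "(('f, nat) trm \<times> ('f, nat) trm) set"
    and A :: "('a, 'f) alg"
  assumes E_wf: "\<forall>(s, t)\<in>E. wf_trm ar s \<and> wf_trm ar t"
    and A_fp: "fin_pres ar E A"
  shows "((\<forall>\<theta>1\<in>Con ar A. \<forall>\<theta>2\<in>Con ar A. \<theta>1 \<subseteq> \<theta>2 \<or> \<theta>2 \<subseteq> \<theta>1) \<longrightarrow>
           coexact ar E A \<noteq> {} \<longrightarrow>
           totally_preordered (coexact ar E A) (unif_le ar A) \<and>
           type_of (coexact ar E A) (unif_le ar A) \<in> {Type1, Type0})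
       \<and> (simple ar A \<longrightarrow>
           coexact ar E A = {} \<or> type_of (coexact ar E A) (unif_le ar A) = Type1)"
proof -
  have alg: "is_alg ar A" using A_fp by (simp add: fin_pres_def models_def)
  show ?thesis
  proof (intro conjI impI)
    assume ch: "\<forall>\<theta>1\<in>Con ar A. \<forall>\<theta>2\<in>Con ar A. \<theta>1 \<subseteq> \<theta>2 \<or> \<theta>2 \<subseteq> \<theta>1"
      and ne: "coexact ar E A \<noteq> {}"
    show "totally_preordered (coexact ar E A) (unif_le ar A)" using total[OF alg ch] .
    show "type_of (coexact ar E A) (unif_le ar A) \<in> {Type1, Type0}"
      using type_total[OF total[OF alg ch] ne] .
  next
    assume s: "simple ar A"
    show "coexact ar E A = {} \<or> type_of (coexact ar E A) (unif_le ar A) = Type1"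
    proof (cases "coexact ar E A = {}")
      case True thus ?thesis by simp
    next
      case False
      have CA: "Con ar A = {Id_on (car A), car A \<times> car A}" using s by (simp add: simple_def)
      have ch: "\<forall>\<theta>1\<in>Con ar A. \<forall>\<theta>2\<in>Con ar A. \<theta>1 \<subseteq> \<theta>2 \<or> \<theta>2 \<subseteq> \<theta>1"
        unfolding CA by auto
      have tp: "totally_preordered (coexact ar E A) (unif_le ar A)" using total[OF alg ch] .
      have kin: "kerU A u \<in> {Id_on (car A), car A \<times> car A}" if "(u, B) \<in> coexact ar E A" for u B
        using ker_con[OF alg] that CA by (auto simp: coexact_def)
      have kid: "Id_on (car A) \<subseteq> kerU A u" for u :: "'a \<Rightarrow> ('f, nat) trm set"
        by (auto simp: kerU_def)
      obtain m0 where m0: "m0 \<in> coexact ar E A" using False by blast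
      have "\<exists>u B. (u, B) \<in> coexact ar E A \<and> (\<forall>v C. (v, C) \<in> coexact ar E A \<longrightarrow> kerU A u \<subseteq> kerU A v)"
      proof (cases "\<exists>u B. (u, B) \<in> coexact ar E A \<and> kerU A u = Id_on (car A)")
        case True
        then obtain u B where "(u, B) \<in> coexact ar E A" "kerU A u = Id_on (car A)" by blast
        thus ?thesis using kid by blast
      next
        case nf: False
        obtain u B where uB: "m0 = (u, B)" by fastforce
        have K: "kerU A v = car A \<times> car A" if "(v, C) \<in> coexact ar E A" for v C
          using kin[OF that] nf that by blast
        have "(u, B) \<in> coexact ar E A" using m0 uB by simp
        thus ?thesis using K by blast
      qed
      then obtain u B where uB: "(u, B) \<in> coexact ar E A"
        and mx: "\<forall>v C. (v, C) \<in> coexact ar E A \<longrightarrow> kerU A u \<subseteq> kerU A v" by blast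
      have "\<forall>x\<in>coexact ar E A. unif_le ar A x (u, B)"
        using le_of_ker[OF alg uB] mx by fast
      thus ?thesis using type_max[OF tp uB] by simp
    qed
  qed
qed

end
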